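(* Let $x,y$ be non-commuting indeterminates and $C=xyx^{-1}y^{-1}$. Let $(R_n)_{n\in\mathbb Z}$ satisfy $$R_{2n}CR_{2n-2}=1+R_{2n-1},\qquad R_{2n+1}CR_{2n-1}=1+R_{2n}^4\qquad(n\in\mathbb Z),$$ with $R_0=yxy^{-1}$ and $R_1=y$. Then for all $n\ge0$, $u_n=R_{2n}$ is a Laurent polynomial in $x,y$ with only non-negative integer coefficients.
   Context: Work in the free skew field (non-commutative rational functions) over $\mathbb C$ generated by $x,y$. A Laurent polynomial in $x,y$ is a $\mathbb Z$-linear combination of words in $x^{\pm1},y^{\pm1}$. *)

theory Defs
  imports Main
begin

datatype letter = X | Xinv | Y | Yinv

fun letter_eval :: "'a::division_ring \<Rightarrow> 'a \<Rightarrow> letter \<Rightarrow> 'a" where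
  "letter_eval x y X = x"
| "letter_eval x y Xinv = inverse x"
| "letter_eval x y Y = y"
| "letter_eval x y Yinv = inverse y"

definition word_eval :: "'a::division_ring \<Rightarrow> 'a \<Rightarrow> letter list \<Rightarrow> 'a" where
  "word_eval x y w = foldr (\<lambda>l acc. letter_eval x y l * acc) w 1"

fun inverse_letters :: "letter \<Rightarrow> letter \<Rightarrow> bool" where
  "inverse_letters X Xinv = True"
| "inverse_letters Xinv X = True"
| "inverse_letters Y Yinv = True"
| "inverse_letters Yinv Y = True"
| "inverse_letters _ _ = False"

text \<open>Freely reduced words = elements of the free group on x, y.\<close>
definition reduced_word :: "letter list \<Rightarrow> bool" where
  "reduced_word w = (\<forall>i. Suc i < length w \<longrightarrow> \<not> inverse_letters (w ! i) (w ! Suc i))"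

text \<open>x, y are invertible and the Laurent polynomials (integer group ring of the
  free group on x, y) embed into the division ring: no nontrivial integer linear
  combination of distinct reduced words vanishes.  The free skew field generated
  by x, y has this property.\<close>
definition free_laurent_embedding :: "'a::division_ring \<Rightarrow> 'a \<Rightarrow> bool" where
  "free_laurent_embedding x y =
     (x \<noteq> 0 \<and> y \<noteq> 0 \<and>
      (\<forall>c :: letter list \<Rightarrow> int.
          finite {w. c w \<noteq> 0} \<longrightarrow> (\<forall>w. c w \<noteq> 0 \<longrightarrow> reduced_word w) \<longrightarrow>
          (\<Sum>w\<in>{w. c w \<noteq> 0}. of_int (c w) * word_eval x y w) = 0 \<longrightarrow>
          (\<forall>w. c w = 0)))"

definition commutator :: "'a::division_ring \<Rightarrow> 'a \<Rightarrow> 'a" where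
  "commutator x y = x * y * inverse x * inverse y"

text \<open>r is a Laurent polynomial in x, y with non-negative integer coefficients:
  a finite sum of words (repetitions giving the multiplicities).\<close>
definition nonneg_laurent :: "'a::division_ring \<Rightarrow> 'a \<Rightarrow> 'a \<Rightarrow> bool" where
  "nonneg_laurent x y r = (\<exists>ws. r = sum_list (map (word_eval x y) ws))"

end

theory Submission
  imports Defs
begin


lemma word_eval_Nil[simp]: "word_eval x y [] = 1"
  by (simp add: word_eval_def)
lemma word_eval_Cons[simp]: "word_eval x y (l # w) = letter_eval x y l * word_eval x y w"
  by (simp add: word_eval_def)
lemma word_eval_append: "word_eval x y (v @ w) = word_eval x y v * word_eval x y w"
  by (induction v) (simp_all add: mult.assoc)

fun red :: "letter list \<Rightarrow> letter list" where
  "red [] = []"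
| "red (l # w) = (case red w of [] \<Rightarrow> [l] | m # v \<Rightarrow> if inverse_letters l m then v else l # m # v)"

lemma reduced_Cons:
  "reduced_word (a # w) \<longleftrightarrow> reduced_word w \<and> (\<forall>b v. w = b # v \<longrightarrow> \<not> inverse_letters a b)"
proof
  assume h: "reduced_word (a # w)"
  have "reduced_word w" unfolding reduced_word_def
  proof (intro allI impI)
    fix i assume "Suc i < length w"
    then have "Suc (Suc i) < length (a # w)" by simp
    then have "\<not> inverse_letters ((a # w) ! Suc i) ((a # w) ! Suc (Suc i))"
      using h unfolding reduced_word_def by blast
    then show "\<not> inverse_letters (w ! i) (w ! Suc i)" by simp
  qed
  moreover have "\<forall>b v. w = b # v \<longrightarrow> \<not> inverse_letters a b"
  proof (intro allI impI)
    fix b v assume wb: "w = b # v"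
    then have "Suc 0 < length (a # w)" by simp
    then have "\<not> inverse_letters ((a # w) ! 0) ((a # w) ! Suc 0)"
      using h unfolding reduced_word_def by blast
    then show "\<not> inverse_letters a b" using wb by simp
  qed
  ultimately show "reduced_word w \<and> (\<forall>b v. w = b # v \<longrightarrow> \<not> inverse_letters a b)" by blast
next
  assume h: "reduced_word w \<and> (\<forall>b v. w = b # v \<longrightarrow> \<not> inverse_letters a b)"
  show "reduced_word (a # w)" unfolding reduced_word_def
  proof (intro allI impI)
    fix i assume i: "Suc i < length (a # w)"
    show "\<not> inverse_letters ((a # w) ! i) ((a # w) ! Suc i)"
    proof (cases i)
      case 0
      then show ?thesis using h i by (cases w) auto
    next
      case (Suc j)
      then show ?thesis using h i unfolding reduced_word_def by auto
    qed
  qed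
qed

lemma reduced_Nil[simp]: "reduced_word []"
  by (simp add: reduced_word_def)

lemma red_reduced: "reduced_word (red w)"
proof (induction w)
  case Nil then show ?case by simp
next
  case (Cons l w)
  show ?case
  proof (cases "red w")
    case Nil then show ?thesis by (simp add: reduced_Cons)
  next
    case (Cons m v)
    then show ?thesis using Cons.IH by (auto simp: reduced_Cons)
  qed
qed

lemma inv_letters_eval:
  fixes x y :: "'a::division_ring"
  assumes "x \<noteq> 0" "y \<noteq> 0" "inverse_letters l m"
  shows "letter_eval x y l * (letter_eval x y m * z) = z"
  using assms by (cases l; cases m) (simp_all add: mult.assoc[symmetric])

lemma red_eval:
  fixes x y :: "'a::division_ring"
  assumes "x \<noteq> 0" "y \<noteq> 0"
  shows "word_eval x y (red w) = word_eval x y w"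
proof (induction w)
  case Nil then show ?case by simp
next
  case (Cons l w)
  show ?case
  proof (cases "red w")
    case Nil then show ?thesis using Cons.IH by simp
  next
    case (Cons m v)
    show ?thesis
    proof (cases "inverse_letters l m")
      case True
      have "word_eval x y (l # w) = letter_eval x y l * (letter_eval x y m * word_eval x y v)"
        using Cons.IH Cons by simp
      also have "\<dots> = word_eval x y v" using inv_letters_eval[OF assms True] .
      finally show ?thesis using Cons True by simp
    next
      case False
      then show ?thesis using Cons.IH Cons by simp
    qed
  qed
qed

lemma sum_list_count:
  fixes f :: "'b \<Rightarrow> 'a::ring_1"
  shows "sum_list (map f xs) = (\<Sum>w\<in>set xs. of_nat (count_list xs w) * f w)"
proof (induction xs)
  case Nil then show ?case by simp
next
  case (Cons a xs)
  show ?case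
  proof (cases "a \<in> set xs")
    case True
    then have s: "set (a # xs) = set xs" by auto
    have "(\<Sum>w\<in>set xs. of_nat (count_list (a#xs) w) * f w)
        = (\<Sum>w\<in>set xs. of_nat (count_list xs w) * f w + (if w = a then f w else 0))"
      by (rule sum.cong) (auto simp: distrib_right)
    also have "\<dots> = (\<Sum>w\<in>set xs. of_nat (count_list xs w) * f w) + f a"
      using True by (simp add: sum.distrib sum.delta)
    finally show ?thesis using Cons s by (simp add: add.commute)
  next
    case False
    have "(\<Sum>w\<in>set xs. of_nat (count_list (a#xs) w) * f w)
        = (\<Sum>w\<in>set xs. of_nat (count_list xs w) * f w)"
      by (rule sum.cong) (use False in auto)
    then show ?thesis using Cons False by simp
  qed
qed

lemma sum_words_nonzero:
  fixes x y :: "'a::division_ring"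
  assumes emb: "free_laurent_embedding x y" and ne: "ws \<noteq> []"
  shows "sum_list (map (word_eval x y) ws) \<noteq> 0"
proof
  assume z: "sum_list (map (word_eval x y) ws) = 0"
  have xy: "x \<noteq> 0" "y \<noteq> 0"
    using conjunct1[OF emb[unfolded free_laurent_embedding_def]]
      conjunct1[OF conjunct2[OF emb[unfolded free_laurent_embedding_def]]] by auto
  define L where "L = map red ws"
  define c where "c = (\<lambda>w. int (count_list L w))"
  have S: "{w. c w \<noteq> 0} = set L" by (auto simp: c_def count_list_0_iff)
  have "sum_list (map (word_eval x y) L) = sum_list (map (word_eval x y) ws)"
    unfolding L_def by (simp add: red_eval[OF xy] comp_def)
  then have "(\<Sum>w\<in>set L. of_nat (count_list L w) * word_eval x y w) = 0"
    using z sum_list_count[of "word_eval x y" L] by simp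
  then have s0: "(\<Sum>w\<in>{w. c w \<noteq> 0}. of_int (c w) * word_eval x y w) = 0"
    using S by (simp add: c_def)
  have fin: "finite {w. c w \<noteq> 0}" using S by simp
  have rw: "\<forall>w. c w \<noteq> 0 \<longrightarrow> reduced_word w"
  proof (intro allI impI)
    fix w assume "c w \<noteq> 0"
    then have "w \<in> set L" using S by blast
    then show "reduced_word w" unfolding L_def using red_reduced by auto
  qed
  have EMB: "\<forall>c :: letter list \<Rightarrow> int.
          finite {w. c w \<noteq> 0} \<longrightarrow> (\<forall>w. c w \<noteq> 0 \<longrightarrow> reduced_word w) \<longrightarrow>
          (\<Sum>w\<in>{w. c w \<noteq> 0}. of_int (c w) * word_eval x y w) = 0 \<longrightarrow>
          (\<forall>w. c w = 0)" using emb unfolding free_laurent_embedding_def by (elim conjE)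
  have "\<forall>w. c w = 0" by (rule mp[OF mp[OF mp[OF spec[OF EMB, of c] fin] rw] s0])
  moreover have "c (hd L) \<noteq> 0" using ne by (cases ws) (simp_all add: c_def L_def)
  ultimately show False by blast
qed





lemma mi1: "(a::'a::division_ring) \<noteq> 0 \<Longrightarrow> a * (inverse a * b) = b"
  by (simp add: mult.assoc[symmetric])
lemma mi2: "(a::'a::division_ring) \<noteq> 0 \<Longrightarrow> inverse a * (a * b) = b"
  by (simp add: mult.assoc[symmetric])
lemma p4: "(b::'a::monoid_mult)^4 = b*b*b*b"
  by (simp add: eval_nat_numeral mult.assoc)

lemma solve_r:
  fixes p c m g :: "'a::division_ring"
  assumes "c \<noteq> 0" "m \<noteq> 0" "p*c*m = g"
  shows "p = g * inverse m * inverse c"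
proof -
  have "p = p*c*m * inverse m * inverse c" using assms(1,2) by (simp add: mult.assoc mi1)
  also have "\<dots> = g * inverse m * inverse c" by (simp only: assms(3))
  finally show ?thesis .
qed

lemma solve_l:
  fixes b z g :: "'a::division_ring"
  assumes "b \<noteq> 0" "b*z = g"
  shows "z = inverse b * g"
  using assms by (simp add: mi2 flip: assms(2))

lemma comm_lemma:
  fixes c m k :: "'a::division_ring"
  assumes "c \<noteq> 0" "m \<noteq> 0" "k*c*m = m*k"
  shows "inverse m * k = k * inverse m * inverse c"
proof -
  have "inverse m * k = inverse m * (k*c*m) * inverse m * inverse c"
    using assms(1,2) by (simp add: mult.assoc mi1)
  also have "\<dots> = inverse m * (m*k) * inverse m * inverse c" by (simp only: assms(3))
  also have "\<dots> = k * inverse m * inverse c" using assms by (simp add: mult.assoc mi2)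
  finally show ?thesis .
qed

lemma q_step:
  fixes c m k p f :: "'a::division_ring"
  assumes c: "c \<noteq> 0" and m: "m \<noteq> 0" and Q: "k*c*m = m*k" and R: "p*c*m = 1+f" and F: "f*k = k*f"
  shows "p*c*k = k*p"
proof -
  have hp: "p = (1+f) * inverse m * inverse c" using solve_r[OF c m R] .
  have h: "inverse m * k = k * inverse m * inverse c" using comm_lemma[OF c m Q] .
  have "p*c*k = (1+f) * (inverse m * k)" using c by (simp add: hp mult.assoc)
  also have "\<dots> = (1+f) * k * inverse m * inverse c" by (simp add: h mult.assoc)
  also have "\<dots> = k * (1+f) * inverse m * inverse c" using F by (simp add: algebra_simps)
  also have "\<dots> = k*p" by (simp add: hp mult.assoc)
  finally show ?thesis .
qed

lemma alg_i:
  fixes a b c d v w :: "'a::division_ring"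
  assumes c: "c \<noteq> 0" and b: "b \<noteq> 0" and v: "v \<noteq> 0"
    and E: "b*c*a = 1+v" and E2: "d*c*b = 1+w" and O: "w*c*v = 1+b^4" and Q: "b*c*v = v*b"
  shows "d = (c*a*(c*a) + b*b) * inverse v * b - c*a"
proof -
  have hd: "d = (1+w) * inverse b * inverse c" using solve_r[OF c b E2] .
  have hw: "w = (1+b^4) * inverse v * inverse c" using solve_r[OF c v O] .
  have hca: "c*a = inverse b * (1+v)" using solve_l[OF b, of "c*a"] E by (simp add: mult.assoc)
  have h4: "inverse v * b = b * inverse v * inverse c" using comm_lemma[OF c v Q] .
  have h6: "inverse v * inverse c * inverse b = inverse b * inverse v"
  proof -
    have "inverse (b*c*v) = inverse (v*b)" using Q by simp
    then show ?thesis using b c v by (simp add: nonzero_inverse_mult_distrib mult.assoc)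
  qed
  have k1: "c*a*b = 1 + c*v"
  proof -
    have "c*a*b = inverse b * b + inverse b * (v*b)" by (simp add: hca algebra_simps)
    also have "\<dots> = 1 + inverse b * (b*c*v)" using b Q by simp
    also have "\<dots> = 1 + c*v" using b by (simp add: mult.assoc mi2)
    finally show ?thesis .
  qed
  define T where "T = inverse b * inverse c + inverse b * inverse v * inverse c + b*b*b*inverse v*inverse c"
  have "d = inverse b * inverse c + (1+b^4) * (inverse v * inverse c * inverse b) * inverse c"
    by (simp add: hd hw algebra_simps)
  also have "\<dots> = inverse b * inverse c + (1+b^4) * inverse b * inverse v * inverse c"
    by (simp only: h6) (simp add: mult.assoc)
  also have "\<dots> = T" using b by (simp add: T_def p4 algebra_simps mi1)
  finally have L: "d = T" .
  have "(c*a*(c*a) + b*b) * inverse v * b - c*a = c*a*(c*a)*(inverse v * b) + b*b*(inverse v*b) - c*a"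
    by (simp add: algebra_simps)
  also have "\<dots> = c*a*(c*a*b)*inverse v*inverse c + b*b*b*inverse v*inverse c - c*a"
    by (simp add: h4 mult.assoc)
  also have "\<dots> = c*a*(1 + c*v)*inverse v*inverse c + b*b*b*inverse v*inverse c - c*a"
    by (simp only: k1)
  also have "\<dots> = c*a*inverse v*inverse c + b*b*b*inverse v*inverse c"
    using c v by (simp add: algebra_simps mi1)
  also have "\<dots> = T" using b v by (simp add: hca T_def algebra_simps mi1)
  finally show ?thesis using L by simp
qed

lemma alg_ii:
  fixes a b c d v w :: "'a::division_ring"
  assumes c: "c \<noteq> 0" and b: "b \<noteq> 0" and v: "v \<noteq> 0" and wnz: "w \<noteq> 0"
    and E: "b*c*a = 1+v" and E2: "d*c*b = 1+w" and O: "w*c*v = 1+b^4" and Q: "b*c*v = v*b"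
    and Q2: "w*c*b = b*w"
  shows "(d + c*a) * inverse b * w = c*b*(c*b) + d*d"
proof -
  have hd: "d = (1+w) * inverse b * inverse c" using solve_r[OF c b E2] .
  have hw: "w = (1+b^4) * inverse v * inverse c" using solve_r[OF c v O] .
  have hca: "c*a = inverse b * (1+v)" using solve_l[OF b, of "c*a"] E by (simp add: mult.assoc)
  have s1: "inverse b * w = w * inverse b * inverse c" using comm_lemma[OF c b Q2] .
  have hw2: "w = d*c*b - 1" using E2 by simp
  have dd: "d = inverse b * inverse c + inverse b * w"
    by (simp add: hd algebra_simps s1[unfolded mult.assoc])
  have h5: "v*b*inverse v = b*c"
    using Q v by (metis mult.assoc right_inverse mult_1_right)
  have pw: "v*(b*b*b*b)*inverse v = (v*b*inverse v)*(v*b*inverse v)*(v*b*inverse v)*(v*b*inverse v)"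
    using v by (simp add: mult.assoc mi2)
  have Z: "c*a*w - d = c*b*c*b*c*b"
  proof -
    have "c*a*w - d = inverse b * (v * w - inverse c)"
      by (simp add: hca dd algebra_simps)
    also have "v*w - inverse c = v*(b*b*b*b)*inverse v*inverse c"
      using v by (simp add: hw p4 algebra_simps mi1)
    also have "\<dots> = b*c*(b*c)*(b*c)*(b*c)*inverse c" by (simp add: pw h5)
    finally show ?thesis using b c by (simp add: mult.assoc mi2)
  qed
  have Z2: "c*a*d - c*a*inverse b*inverse c = d*inverse b*inverse c + c*b*(c*b)"
  proof -
    have "c*a*d - c*a*inverse b*inverse c = c*a*w*inverse b*inverse c"
      using b c by (simp add: hw2 algebra_simps mi1)
    also have "\<dots> = (d + c*b*c*b*c*b)*inverse b*inverse c"
      using Z by (simp add: algebra_simps)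
    also have "\<dots> = d*inverse b*inverse c + c*b*(c*b)"
      using b c by (simp add: algebra_simps mi1)
    finally show ?thesis .
  qed
  have "(d + c*a) * inverse b * w = (d + c*a) * (w * inverse b * inverse c)"
    by (simp add: mult.assoc s1)
  also have "\<dots> = (d + c*a) * ((d*c*b - 1) * inverse b * inverse c)"
    by (simp add: hw2[symmetric])
  also have "\<dots> = d*d + c*a*d - d*inverse b*inverse c - c*a*inverse b*inverse c"
    using b c by (simp add: algebra_simps mi1)
  also have "\<dots> = c*b*(c*b) + d*d" using Z2 by (simp add: algebra_simps)
  finally show ?thesis .
qed




definition pos :: "'a::division_ring \<Rightarrow> 'a \<Rightarrow> 'a \<Rightarrow> bool" where
  "pos x y z = (\<exists>ws. ws \<noteq> [] \<and> z = sum_list (map (word_eval x y) ws))"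

lemma pos_word: "pos x y (word_eval x y w)"
  unfolding pos_def by (rule exI[of _ "[w]"]) simp

lemma pos_add: "pos x y a \<Longrightarrow> pos x y b \<Longrightarrow> pos x y (a + b)"
proof -
  assume "pos x y a" "pos x y b"
  then obtain ws1 ws2 where w: "ws1 \<noteq> []" "a = sum_list (map (word_eval x y) ws1)"
    "ws2 \<noteq> []" "b = sum_list (map (word_eval x y) ws2)" unfolding pos_def by blast
  show ?thesis unfolding pos_def by (rule exI[of _ "ws1 @ ws2"]) (simp add: w)
qed

lemma left_mul_words:
  "word_eval x y a * sum_list (map (word_eval x y) ws) = sum_list (map (word_eval x y) (map ((@) a) ws))"
  by (induction ws) (simp_all add: word_eval_append distrib_left)

lemma mul_words:
  "sum_list (map (word_eval x y) ws1) * sum_list (map (word_eval x y) ws2)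
   = sum_list (map (word_eval x y) (concat (map (\<lambda>a. map ((@) a) ws2) ws1)))"
  by (induction ws1) (simp_all add: distrib_right left_mul_words)

lemma pos_mult: "pos x y a \<Longrightarrow> pos x y b \<Longrightarrow> pos x y (a * b)"
proof -
  assume "pos x y a" "pos x y b"
  then obtain ws1 ws2 where w: "ws1 \<noteq> []" "a = sum_list (map (word_eval x y) ws1)"
    "ws2 \<noteq> []" "b = sum_list (map (word_eval x y) ws2)" unfolding pos_def by blast
  have "concat (map (\<lambda>a. map ((@) a) ws2) ws1) \<noteq> []"
    using w(1,3) by (cases ws1; cases ws2) auto
  then show ?thesis unfolding pos_def
    by (intro exI[of _ "concat (map (\<lambda>a. map ((@) a) ws2) ws1)"]) (simp add: w mul_words)
qed

lemma pos_nz: "free_laurent_embedding x y \<Longrightarrow> pos x y z \<Longrightarrow> z \<noteq> 0"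
proof -
  assume e: "free_laurent_embedding x y" and "pos x y z"
  then obtain ws where "ws \<noteq> []" "z = sum_list (map (word_eval x y) ws)" unfolding pos_def by blast
  then show "z \<noteq> 0" using sum_words_nonzero[OF e] by simp
qed

lemma pos_one: "pos x y 1"
  using pos_word[of x y "[]"] by simp

definition rw :: "'a::division_ring \<Rightarrow> 'a \<Rightarrow> 'a" where
  "rw x y = inverse x*inverse x*inverse y + inverse x*y*inverse x*inverse y + y*inverse x*inverse x*inverse y"

fun Dseq :: "'a::division_ring \<Rightarrow> 'a \<Rightarrow> (nat \<Rightarrow> 'a) \<Rightarrow> nat \<Rightarrow> 'a" where
  "Dseq x y u 0 = inverse x"
| "Dseq x y u (Suc n) = x*x*inverse y * Dseq x y u n + rw x y * u (Suc n)"

lemma pos_rw: "pos x y (rw x y)"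
proof -
  have "rw x y = word_eval x y [Xinv,Xinv,Yinv] + word_eval x y [Xinv,Y,Xinv,Yinv] + word_eval x y [Y,Xinv,Xinv,Yinv]"
    by (simp add: rw_def mult.assoc)
  then show ?thesis by (simp only:) (intro pos_add pos_word)
qed

lemma core:
  fixes x y C :: "'a::division_ring" and u w :: "nat \<Rightarrow> 'a"
  assumes emb: "free_laurent_embedding x y" and Cdef: "C = x*y*inverse x*inverse y"
    and E: "\<And>n. u (Suc n) * C * u n = 1 + w n"
    and O: "\<And>n. w (Suc n) * C * w n = 1 + u (Suc n)^4"
    and u0: "u 0 = y*x*inverse y" and w0: "w 0 = y"
  shows "pos x y (u n)"
proof -
  have x: "x \<noteq> 0" using conjunct1[OF emb[unfolded free_laurent_embedding_def]] .
  have y: "y \<noteq> 0" using conjunct1[OF conjunct2[OF emb[unfolded free_laurent_embedding_def]]] .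
  have Cnz: "C \<noteq> 0" using x y by (simp add: Cdef)
  have Cu0: "C * u 0 = x" using x y by (simp add: Cdef u0 mult.assoc mi2)
  have Qe0: "w 0 * C * u 0 = u 0 * w 0" using y by (simp add: w0 mult.assoc Cu0[unfolded mult.assoc]) (simp add: u0 mult.assoc)
  have u1: "u 1 = (1+y) * inverse x"
  proof -
    have "u 1 * x = 1 + y" using E[of 0] w0 by (simp add: mult.assoc Cu0[symmetric])
    have "u 1 = u 1 * x * inverse x" using x by (simp add: mult.assoc)
    also have "\<dots> = (1 + y) * inverse x" by (simp only: \<open>u 1 * x = 1 + y\<close>)
    finally show ?thesis .
  qed
  have posnz: "\<And>z. pos x y z \<Longrightarrow> z \<noteq> 0" using pos_nz[OF emb] .
  have wnz: "w m \<noteq> 0 \<and> w (Suc m) \<noteq> 0" if "pos x y (u (Suc m))" for m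
  proof -
    have "pos x y (1 + u (Suc m)^4)" using that by (simp add: p4 pos_add pos_one pos_mult)
    then have "w (Suc m) * C * w m \<noteq> 0" using O[of m] posnz by simp
    then show ?thesis by auto
  qed
  have QQ: "(\<forall>m\<le>n. u m \<noteq> 0) \<longrightarrow> (\<forall>m<n. w m \<noteq> 0) \<longrightarrow>
      w n * C * u n = u n * w n \<and> u (Suc n) * C * w n = w n * u (Suc n)" for n
  proof (induction n)
    case 0
    show ?case
    proof (intro impI conjI)
      assume "\<forall>m\<le>0. u m \<noteq> 0"
      then have "u 0 \<noteq> 0" by simp
      show "w 0 * C * u 0 = u 0 * w 0" by (rule Qe0)
      show "u (Suc 0) * C * w 0 = w 0 * u (Suc 0)"
        by (rule q_step[OF Cnz \<open>u 0 \<noteq> 0\<close> Qe0 E[of 0]]) simp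
    qed
  next
    case (Suc n)
    show ?case
    proof (intro impI)
      assume h1: "\<forall>m\<le>Suc n. u m \<noteq> 0" and h2: "\<forall>m<Suc n. w m \<noteq> 0"
      then have IH: "u (Suc n) * C * w n = w n * u (Suc n)" using Suc by auto
      have Qe: "w (Suc n) * C * u (Suc n) = u (Suc n) * w (Suc n)"
        by (rule q_step[OF Cnz _ IH O[of n]]) (use h2 in \<open>auto simp: power_commutes\<close>)
      have Qo: "u (Suc (Suc n)) * C * w (Suc n) = w (Suc n) * u (Suc (Suc n))"
        by (rule q_step[OF Cnz _ Qe E[of "Suc n"]]) (use h1 in auto)
      show "w (Suc n) * C * u (Suc n) = u (Suc n) * w (Suc n) \<and>
            u (Suc (Suc n)) * C * w (Suc n) = w (Suc n) * u (Suc (Suc n))" using Qe Qo by blast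
    qed
  qed
  define a where "a = y*inverse x*y*inverse x*inverse y"
  define bb where "bb = x*x*inverse y"
  define K where "K = a + bb + rw x y"
  have hK: "K = (x*x + u 1 * u 1) * inverse y"
    unfolding K_def a_def bb_def rw_def u1 by (simp add: algebra_simps)
  have hba: "bb * a = C" using x y by (simp add: bb_def a_def Cdef mult.assoc mi1 mi2)
  have posa: "pos x y a"
  proof -
    have "pos x y (word_eval x y [Y,Xinv,Y,Xinv,Yinv])" by (rule pos_word)
    then show ?thesis by (simp add: a_def mult.assoc)
  qed
  have posbb: "pos x y bb"
  proof -
    have "pos x y (word_eval x y [X,X,Yinv])" by (rule pos_word)
    then show ?thesis by (simp add: bb_def mult.assoc)
  qed
  let ?D = "Dseq x y u"
  have M: "(\<forall>m\<le>Suc n. pos x y (u m)) \<and> pos x y (?D n) \<and> u (Suc n) = a * u n + ?D n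
        \<and> u (Suc (Suc n)) + C * u n = K * u (Suc n)" for n
  proof (induction n)
    case 0
    have p0: "pos x y (u 0)"
    proof -
      have "pos x y (word_eval x y [Y,X,Yinv])" by (rule pos_word)
      then show ?thesis by (simp add: u0 mult.assoc)
    qed
    have p1: "pos x y (u 1)"
    proof -
      have "u 1 = word_eval x y [Xinv] + word_eval x y [Y,Xinv]" unfolding u1 by (simp add: algebra_simps)
      then show ?thesis by (simp only:) (intro pos_add pos_word)
    qed
    have pd: "pos x y (?D 0)" using pos_word[of x y "[Xinv]"] by simp
    have e1: "u 1 = a * u 0 + ?D 0"
      unfolding u1 using x y by (simp add: a_def u0 mult.assoc mi2 algebra_simps)
    have u0nz: "u 0 \<noteq> 0" using posnz p0 .
    have u1nz: "u 1 \<noteq> 0" using posnz p1 .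
    have Qo0: "u 1 * C * w 0 = w 0 * u 1" using QQ[of 0] u0nz by simp
    have E0: "u 1 * C * u 0 = 1 + w 0" using E[of 0] by simp
    have E1: "u 2 * C * u 1 = 1 + w 1" using E[of 1] by (simp add: numeral_2_eq_2)
    have O0: "w 1 * C * w 0 = 1 + u 1 ^ 4" using O[of 0] by simp
    have w0nz: "w 0 \<noteq> 0" using w0 y by simp
    have "u 2 = (C * u 0 * (C * u 0) + u 1 * u 1) * inverse (w 0) * u 1 - C * u 0"
      by (rule alg_i[OF Cnz u1nz w0nz E0 E1 O0 Qo0])
    then have "u 2 + C * u 0 = K * u 1" by (simp add: hK Cu0 w0 mult.assoc)
    then show ?case using p0 p1 pd e1 by (auto simp: le_Suc_eq numeral_2_eq_2)
  next
    case (Suc n)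
    have allp: "\<forall>m\<le>Suc n. pos x y (u m)" and pD: "pos x y (?D n)"
      and e: "u (Suc n) = a * u n + ?D n" and L: "u (Suc (Suc n)) + C * u n = K * u (Suc n)"
      using Suc by blast+
    have e2: "u (Suc (Suc n)) = a * u (Suc n) + ?D (Suc n)"
    proof -
      have "u (Suc (Suc n)) = K * u (Suc n) - C * u n" using L by (simp add: algebra_simps)
      also have "\<dots> = a * u (Suc n) + rw x y * u (Suc n) + bb * (a * u n + ?D n) - C * u n"
        by (simp add: K_def e[symmetric] algebra_simps)
      also have "\<dots> = a * u (Suc n) + ?D (Suc n)"
      proof -
        have hb: "bb * (a * u n) = C * u n" by (simp only: mult.assoc[symmetric] hba)
        have hD: "?D (Suc n) = bb * ?D n + rw x y * u (Suc n)" by (simp add: bb_def)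
        show ?thesis unfolding hD distrib_left hb by (simp add: algebra_simps)
      qed
      finally show ?thesis .
    qed
    have pD2: "pos x y (?D (Suc n))"
      using pD allp by (simp add: pos_add pos_mult posbb[unfolded bb_def] pos_rw)
    have pu2: "pos x y (u (Suc (Suc n)))"
      using e2 pD2 allp by (simp add: pos_add pos_mult posa)
    have allp2: "\<forall>m\<le>Suc (Suc n). pos x y (u m)" using allp pu2 le_Suc_eq by auto
    have unz: "u m \<noteq> 0" if "m \<le> Suc (Suc n)" for m using allp2 that posnz by blast
    have wnz2: "w m \<noteq> 0" if "m \<le> Suc n" for m
    proof -
      have "pos x y (u (Suc m))" using allp2 that by simp
      then show ?thesis using wnz by blast
    qed
    have Q1: "w (Suc n) * C * u (Suc n) = u (Suc n) * w (Suc n) \<and>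
              u (Suc (Suc n)) * C * w (Suc n) = w (Suc n) * u (Suc (Suc n))"
      using QQ[of "Suc n"] unz wnz2 by simp
    have Q0: "u (Suc n) * C * w n = w n * u (Suc n)"
      using QQ[of n] unz wnz2 by simp
    define X where "X = C * u (Suc n) * (C * u (Suc n)) + u (Suc (Suc n)) * u (Suc (Suc n))"
    have ii: "(u (Suc (Suc n)) + C * u n) * inverse (u (Suc n)) * w (Suc n) = X"
      unfolding X_def
      by (rule alg_ii[OF Cnz unz[of "Suc n"] wnz2[of n] wnz2[of "Suc n"] E[of n] E[of "Suc n"] O[of n] Q0 conjunct1[OF Q1]]) simp_all
    have KX: "K * w (Suc n) = X"
      using ii unz[of "Suc n"] by (simp add: L mult.assoc mi1)
    have i: "u (Suc (Suc (Suc n))) = X * inverse (w (Suc n)) * u (Suc (Suc n)) - C * u (Suc n)"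
      unfolding X_def
      by (rule alg_i[OF Cnz unz[of "Suc (Suc n)"] wnz2[of "Suc n"] E[of "Suc n"] E[of "Suc (Suc n)"] O[of "Suc n"] conjunct2[OF Q1]]) simp_all
    have "X * inverse (w (Suc n)) = K"
      using wnz2[of "Suc n"] by (simp add: KX[symmetric] mult.assoc)
    then have L2: "u (Suc (Suc (Suc n))) + C * u (Suc n) = K * u (Suc (Suc n))"
      using i by simp
    show ?case by (rule conjI[OF allp2 conjI[OF pD2 conjI[OF e2 L2]]])
  qed
  have "\<forall>m\<le>Suc n. pos x y (u m)" by (rule conjunct1[OF M[of n]])
  then show ?thesis by simp
qed


theorem corollary4p4:
  fixes x y :: "'a::division_ring" and R :: "int \<Rightarrow> 'a"
  assumes emb: "free_laurent_embedding x y"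
    and rec_even: "\<forall>n. R (2*n) * commutator x y * R (2*n - 2) = 1 + R (2*n - 1)"
    and rec_odd: "\<forall>n. R (2*n + 1) * commutator x y * R (2*n - 1) = 1 + R (2*n) ^ 4"
    and init0: "R 0 = y * x * inverse y"
    and init1: "R 1 = y"
  shows "\<forall>n::int. n \<ge> 0 \<longrightarrow> nonneg_laurent x y (R (2*n))"
proof -
  define u where "u = (\<lambda>n::nat. R (2 * int n))"
  define w where "w = (\<lambda>n::nat. R (2 * int n + 1))"
  have E: "u (Suc n) * commutator x y * u n = 1 + w n" for n
  proof -
    have h: "R (2*int (Suc n)) * commutator x y * R (2*int (Suc n) - 2) = 1 + R (2*int (Suc n) - 1)"
      using rec_even by blast
    have e1: "2*int (Suc n) - 2 = 2*int n" and e2: "2*int (Suc n) - 1 = 2*int n + 1" by simp_all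
    show ?thesis using h[unfolded e1 e2] unfolding u_def w_def .
  qed
  have O: "w (Suc n) * commutator x y * w n = 1 + u (Suc n)^4" for n
  proof -
    have h: "R (2*int (Suc n) + 1) * commutator x y * R (2*int (Suc n) - 1) = 1 + R (2*int (Suc n)) ^ 4"
      using rec_odd by blast
    have e2: "2*int (Suc n) - 1 = 2*int n + 1" by simp
    show ?thesis using h[unfolded e2] unfolding u_def w_def .
  qed
  have u0: "u 0 = y*x*inverse y" using init0 by (simp add: u_def)
  have w0: "w 0 = y" using init1 by (simp add: w_def)
  have P: "pos x y (u m)" for m
    by (rule core[OF emb commutator_def E O u0 w0])
  show ?thesis
  proof (intro allI impI)
    fix n :: int assume "n \<ge> 0"
    then have "R (2*n) = u (nat n)" by (simp add: u_def)
    then show "nonneg_laurent x y (R (2*n))"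
      using P[of "nat n"] unfolding pos_def nonneg_laurent_def by auto
  qed
qed

end
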